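(* Fix an initial exchange matrix $B^0$ and initial coefficients $p_1,\dots,p_n\in\mathbb P$ at the vertex $v_0$, and let $\mathcal S=\mathbb{Q}\mathbb{P}_{\mathrm{sf}}(y_1,\dots,y_n)$. Then for every vertex $v\in\mathbb T^n$ and every $j\in[1,n]$, $$\widetilde Y_{j;v}=\frac{Y^{\mathcal S}_{j;v}(p_1y_1,\dots,p_ny_n)}{p_{j;v}},$$ where $Y^{\mathcal S}_{j;v}(p_1y_1,\dots,p_ny_n)$ denotes the image of $Y_{j;v}\in\mathbb Q_{\mathrm{sf}}(y_1,\dots,y_n)$ under the unique semifield morphism $\mathbb Q_{\mathrm{sf}}(y_1,\dots,y_n)\to\mathcal S$ sending $y_i\mapsto p_iy_i$.
   Context: A semifield $(\mathbb P,\oplus,\cdot,1)$ satisfies the field axioms except that the auxiliary addition $\oplus$ need not have a neutral element or inverses. For $p\in\mathbb P$ set $p^+=p/(p\oplus 1)$, $p^-=1/(p\oplus1)$, and for $x\in\mathbb R$: $p^{[\![x]\!]}=p^-$ if $x<0$, $=1$ if $x=0$, $=p^+$ if $x>0$. For a set $S$, the universal semifield $\mathbb Q_{\mathrm{sf}}(S)\subset\mathbb Q(S)$ consists of rational functions expressible as ratios of polynomials in $S$ with positive integer coefficients; for any semifield $\mathbb P'$ and any map $S\to\mathbb P'$ there is a unique semifield morphism $\mathbb Q_{\mathrm{sf}}(S)\to\mathbb P'$ extending it, and the image of $f$ under the morphism $s_i\mapsto q_i$ is written $f^{\mathbb P'}(q_1,\dots)$. For a semifield $\mathbb P$, $\mathbb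 Z\mathbb P$ is the group ring (a domain), $\mathbb Q\mathbb P$ its fraction field, and $\mathbb Q\mathbb P_{\mathrm{sf}}(u_1,\dots,u_n)\subset\mathbb Q\mathbb P(u_1,\dots,u_n)$ the semifield of rational functions $f/g$ with $f,g$ nonzero polynomials in the $u_i$ whose coefficients are nonnegative integer combinations of elements of $\mathbb P$ (with ordinary $+$ and $\cdot$). Matrix mutation in direction $k$ of a skew-symmetrizable $B=(b_{ij})$: $b'_{ij}=-b_{ij}$ if $i=k$ or $j=k$, else $b'_{ij}=b_{ij}+\operatorname{sgn}(b_{ik})[b_{ik}b_{kj}]_+$, with $[x]_+=\max(x,0)$. A $Y$-seed $(\mathbf y,B)$ in a semifield mutates in direction $k$ to $(\mathbf y',B')$ with $y'_k=y_k^{-1}$ and $y'_j=y_j(1\oplus y_k^{-\operatorname{sgn}(b_{kj})})^{-b_{kj}}$ for $j\ne k$. A labeled $Y$-seed with coefficients is a triple $(\mathbf y,\mathbf p,B)$ with $(\mathbf p,B)$ a $Y$-seed in $\mathbb P$ and $(\mathbf y,B)$ a $Y$-seed in some $\mathbb Q\mathbb P_{\mathrm{sf}}(u_1,\dots,u_n)$; its mutation in direction $k$ is $(\mathbf y',\mathbf p',B')$ where $(\mathbf p',B')$ is the $Y$-seed mutation of $(\mathbf p,B)$, $y'_k=y_k^{-1}$, and for $j\neq k$: $y'_j=y_j\big(p_k^{[\![b_{kj}]\!]}+p_k^{[\![-b_{kj}]\!]}y_k^{-\operatorname{sgn}(b_{kj})}\big)^{-b_{kj}}$ (ordinary addition).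 $\mathbb T^n$ is the $n$-regular tree with edges labeled by $[1,n]$ so that edges at a vertex have distinct labels, with initial vertex $v_0$; a ($Y$-)pattern is an assignment of seeds to vertices such that seeds at vertices joined by an edge labeled $k$ are related by mutation in direction $k$. $Y_{j;v}\in\mathbb Q_{\mathrm{sf}}(y_1,\dots,y_n)$ are the components of the $Y$-pattern $v\mapsto((Y_{1;v},\dots,Y_{n;v}),B_v)$ with initial seed $((y_1,\dots,y_n),B^0)$ at $v_0$; $\widetilde Y_{j;v}\in\mathbb Q\mathbb P_{\mathrm{sf}}(y_1,\dots,y_n)$ and $p_{j;v}\in\mathbb P$ are the components of the $Y$-pattern with coefficients $v\mapsto((\widetilde Y_{1;v},\dots,\widetilde Y_{n;v}),(p_{1;v},\dots,p_{n;v}),B_v)$ with initial seed $((y_1,\dots,y_n),(p_1,\dots,p_n),B^0)$ at $v_0$. *)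

theory Defs
  imports Main "HOL-Library.Poly_Mapping"
begin

text \<open>No neutral element or inverses for sfadd.\<close>

class semifield = comm_monoid_mult + inverse +
  fixes sfadd :: "'a \<Rightarrow> 'a \<Rightarrow> 'a" (infixl "\<oplus>" 65)
  assumes sf_left_inverse: "inverse a * a = 1"
    and sf_divide: "a / b = a * inverse b"
    and sfadd_assoc: "(a \<oplus> b) \<oplus> c = a \<oplus> (b \<oplus> c)"
    and sfadd_comm: "a \<oplus> b = b \<oplus> a"
    and sf_distrib: "a * (b \<oplus> c) = a * b \<oplus> a * c"

definition spow :: "'a::semifield \<Rightarrow> int \<Rightarrow> 'a" where
  "spow x k = (if 0 \<le> k then x ^ nat k else inverse x ^ nat (- k))"

definition pplus :: "'a::semifield \<Rightarrow> 'a" where "pplus p = p / (p \<oplus> 1)"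
definition pminus :: "'a::semifield \<Rightarrow> 'a" where "pminus p = 1 / (p \<oplus> 1)"

definition pbr :: "'a::semifield \<Rightarrow> int \<Rightarrow> 'a" where
  "pbr p x = (if x < 0 then pminus p else if x = 0 then 1 else pplus p)"

text \<open>Wrapper writing the multiplicative group of P additively, so that the
 finitely supported int-valued functions on mg with Poly_Mapping's convolution product is the group ring ZP.\<close>
datatype 'p mg = MG 'p

instantiation mg :: (semifield) comm_monoid_add
begin
fun plus_mg :: "'a mg \<Rightarrow> 'a mg \<Rightarrow> 'a mg" where
  "plus_mg (MG a) (MG b) = MG (a * b)"
definition zero_mg :: "'a mg" where "zero_mg = MG 1"
instance
proof
  fix a b c :: "'a mg"
  show "a + b + c = a + (b + c)"
    by (cases a; cases b; cases c) (simp add: mult.assoc)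
  show "a + b = b + a"
    by (cases a; cases b) (simp add: mult.commute)
  show "0 + a = a"
    by (cases a) (simp add: zero_mg_def)
qed
end

type_synonym 'p ZP = "'p mg \<Rightarrow>\<^sub>0 int"
text \<open>Polynomials in y_0, y_1, ... with coefficients in ZP (keys are exponent vectors).\<close>
type_synonym 'p ZPy = "(nat \<Rightarrow>\<^sub>0 nat) \<Rightarrow>\<^sub>0 'p ZP"

definition cP :: "'p::semifield \<Rightarrow> 'p ZPy" where
  "cP p = Poly_Mapping.single 0 (Poly_Mapping.single (MG p) 1)"

definition yv :: "nat \<Rightarrow> 'p::semifield ZPy" where
  "yv i = Poly_Mapping.single (Poly_Mapping.single i 1) 1"

text \<open>ZP[y] is a domain, so QP(y) = Frac(ZP[y]); a fraction is a pair (num, den)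
 and equality in the fraction field is cross-multiplication.\<close>
type_synonym 'p frac = "'p ZPy \<times> 'p ZPy"

definition feq :: "'p::semifield frac \<Rightarrow> 'p frac \<Rightarrow> bool" where
  "feq a b \<longleftrightarrow> fst a * snd b = fst b * snd a"

definition fadd :: "'p::semifield frac \<Rightarrow> 'p frac \<Rightarrow> 'p frac" where
  "fadd a b = (fst a * snd b + fst b * snd a, snd a * snd b)"
definition fmul :: "'p::semifield frac \<Rightarrow> 'p frac \<Rightarrow> 'p frac" where
  "fmul a b = (fst a * fst b, snd a * snd b)"
definition finv :: "'p::semifield frac \<Rightarrow> 'p frac" where
  "finv a = (snd a, fst a)"
definition fone :: "'p::semifield frac" where
  "fone = (1, 1)"
definition fconst :: "'p::semifield ZPy \<Rightarrow> 'p frac" where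
  "fconst f = (f, 1)"

fun fnpow :: "'p::semifield frac \<Rightarrow> nat \<Rightarrow> 'p frac" where
  "fnpow a 0 = fone"
| "fnpow a (Suc m) = fmul a (fnpow a m)"

definition fpow :: "'p::semifield frac \<Rightarrow> int \<Rightarrow> 'p frac" where
  "fpow a k = (if 0 \<le> k then fnpow a (nat k) else fnpow (finv a) (nat (- k)))"

text \<open>Elements of Q_sf(y_0,y_1,...) are represented by subtraction-free expressions;
 the unique semifield morphism to a semifield sends the element denoted by an
 expression to the evaluation of that expression.\<close>
datatype sfe = SVar nat | SOne | SAdd sfe sfe | SMul sfe sfe | SInv sfe

fun snpow :: "sfe \<Rightarrow> nat \<Rightarrow> sfe" where
  "snpow e 0 = SOne"
| "snpow e (Suc m) = SMul e (snpow e m)"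

definition sepow :: "sfe \<Rightarrow> int \<Rightarrow> sfe" where
  "sepow e k = (if 0 \<le> k then snpow e (nat k) else snpow (SInv e) (nat (- k)))"

text \<open>Evaluation in S = QP_sf(y) (auxiliary addition of S = ordinary addition).\<close>
fun evalS :: "(nat \<Rightarrow> 'p::semifield frac) \<Rightarrow> sfe \<Rightarrow> 'p frac" where
  "evalS \<rho> (SVar i) = \<rho> i"
| "evalS \<rho> SOne = fone"
| "evalS \<rho> (SAdd a b) = fadd (evalS \<rho> a) (evalS \<rho> b)"
| "evalS \<rho> (SMul a b) = fmul (evalS \<rho> a) (evalS \<rho> b)"
| "evalS \<rho> (SInv a) = finv (evalS \<rho> a)"

type_synonym exmat = "nat \<Rightarrow> nat \<Rightarrow> int"

definition bmut :: "nat \<Rightarrow> exmat \<Rightarrow> exmat" where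
  "bmut k B i j = (if i = k \<or> j = k then - B i j
     else B i j + sgn (B i k) * max (B i k * B k j) 0)"

definition skew_symmetrizable :: "nat \<Rightarrow> exmat \<Rightarrow> bool" where
  "skew_symmetrizable n B \<longleftrightarrow>
     (\<exists>d::nat \<Rightarrow> int. (\<forall>i<n. 0 < d i) \<and> (\<forall>i<n. \<forall>j<n. d i * B i j = - (d j * B j i)))"

definition ymut_sf :: "nat \<Rightarrow> (nat \<Rightarrow> sfe) \<times> exmat \<Rightarrow> (nat \<Rightarrow> sfe) \<times> exmat" where
  "ymut_sf k s = (let y = fst s; B = snd s in
     ((\<lambda>j. if j = k then SInv (y k)
           else SMul (y j) (sepow (SAdd SOne (sepow (y k) (- sgn (B k j)))) (- B k j))),
      bmut k B))"

definition ymut_P :: "nat \<Rightarrow> (nat \<Rightarrow> 'p::semifield) \<times> exmat \<Rightarrow> (nat \<Rightarrow> 'p) \<times> exmat" where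
  "ymut_P k s = (let y = fst s; B = snd s in
     ((\<lambda>j. if j = k then inverse (y k)
           else y j * spow (1 \<oplus> spow (y k) (- sgn (B k j))) (- B k j)),
      bmut k B))"

definition ymut_coef :: "nat \<Rightarrow> (nat \<Rightarrow> 'p::semifield frac) \<times> (nat \<Rightarrow> 'p) \<times> exmat
    \<Rightarrow> (nat \<Rightarrow> 'p frac) \<times> (nat \<Rightarrow> 'p) \<times> exmat" where
  "ymut_coef k s = (let y = fst s; p = fst (snd s); B = snd (snd s) in
     ((\<lambda>j. if j = k then finv (y k)
           else fmul (y j)
             (fpow (fadd (fconst (cP (pbr (p k) (B k j))))
                         (fmul (fconst (cP (pbr (p k) (- B k j)))) (fpow (y k) (- sgn (B k j)))))
                   (- B k j))),
      ymut_P k (p, B)))"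

text \<open>Vertices of T^n correspond to reduced words (no two consecutive equal labels)
 in labels 0..n-1: the label sequence of the unique path from v0.\<close>
definition tree_vertex :: "nat \<Rightarrow> nat list \<Rightarrow> bool" where
  "tree_vertex n ks \<longleftrightarrow> set ks \<subseteq> {..<n} \<and> (\<forall>i. Suc i < length ks \<longrightarrow> ks ! i \<noteq> ks ! Suc i)"

definition Y_sf :: "exmat \<Rightarrow> nat list \<Rightarrow> nat \<Rightarrow> sfe" where
  "Y_sf B0 ks j = fst (fold ymut_sf ks (SVar, B0)) j"

definition coef_seed :: "exmat \<Rightarrow> (nat \<Rightarrow> 'p::semifield) \<Rightarrow> nat list
    \<Rightarrow> (nat \<Rightarrow> 'p frac) \<times> (nat \<Rightarrow> 'p) \<times> exmat" where
  "coef_seed B0 p0 ks = fold ymut_coef ks ((\<lambda>i. fconst (yv i)), p0, B0)"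

definition Ytilde :: "exmat \<Rightarrow> (nat \<Rightarrow> 'p::semifield) \<Rightarrow> nat list \<Rightarrow> nat \<Rightarrow> 'p frac" where
  "Ytilde B0 p0 ks j = fst (coef_seed B0 p0 ks) j"

definition pcoef :: "exmat \<Rightarrow> (nat \<Rightarrow> 'p::semifield) \<Rightarrow> nat list \<Rightarrow> nat \<Rightarrow> 'p" where
  "pcoef B0 p0 ks j = fst (snd (coef_seed B0 p0 ks)) j"

end

theory Submission
  imports Defs
begin

lemma sf_right_inverse: "(a::'a::semifield) * inverse a = 1"
  using sf_left_inverse[of a] by (simp add: mult.commute)

lemma sf_inv_unique: "(a::'a::semifield) * b = 1 \<Longrightarrow> inverse a = b"
proof -
  assume h: "a * b = 1"
  have "inverse a = inverse a * (a * b)" using h by simp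
  also have "\<dots> = b" by (simp add: mult.assoc[symmetric] sf_left_inverse)
  finally show ?thesis .
qed

lemma sf_inv_key: "inverse (1 \<oplus> inverse (p::'a::semifield)) = p * inverse (p \<oplus> 1)"
proof (rule sf_inv_unique)
  have "(1 \<oplus> inverse p) * p = p \<oplus> 1"
    by (simp add: mult.commute[of _ p] sf_distrib sf_right_inverse sfadd_comm)
  then show "(1 \<oplus> inverse p) * (p * inverse (p \<oplus> 1)) = 1"
    by (simp add: mult.assoc[symmetric] sf_right_inverse)
qed

lemma cP_mult: "cP (a * b) = cP a * cP (b::'a::semifield)"
  by (simp add: cP_def mult_single)

lemma cP_one: "cP (1::'a::semifield) = 1"
  by (simp add: cP_def zero_mg_def[symmetric])

lemma cP_inv: "cP (a::'a::semifield) * cP (inverse a) = 1"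
  by (simp add: cP_mult[symmetric] sf_right_inverse cP_one)

lemma cP_pplus: "cP (pplus p) = cP (p::'a::semifield) * cP (inverse (p \<oplus> 1))"
  by (simp add: pplus_def sf_divide cP_mult)
lemma cP_pminus: "cP (pminus p) = cP (inverse ((p::'a::semifield) \<oplus> 1))"
  by (simp add: pminus_def sf_divide)

lemma cP_power: "cP (a ^ m) = cP (a::'a::semifield) ^ m"
  by (induct m) (simp_all add: cP_one cP_mult)

lemma fnpow_eq: "fnpow x m = (fst x ^ m, snd x ^ m)"
  by (induct m) (auto simp: fone_def fmul_def)

lemma evalS_snpow: "evalS \<rho> (snpow e m) = fnpow (evalS \<rho> e) m"
  by (induct m) auto

definition INV :: "(nat \<Rightarrow> 'p::semifield frac) \<Rightarrow> (nat \<Rightarrow> 'p frac) \<times> (nat \<Rightarrow> 'p) \<times> exmat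
   \<Rightarrow> (nat \<Rightarrow> sfe) \<times> exmat \<Rightarrow> bool" where
  "INV \<rho> s t \<longleftrightarrow> snd (snd s) = snd t \<and>
     (\<forall>j. \<exists>l. fst s j = (l * fst (evalS \<rho> (fst t j)), l * snd (evalS \<rho> (fst t j)) * cP (fst (snd s) j)))"

lemma step:
  assumes "INV \<rho> (yt, p, B) (Y, B)"
  shows "INV \<rho> (ymut_coef k (yt, p, B)) (ymut_sf k (Y, B))"
  unfolding INV_def
proof (intro conjI allI)
  show "snd (snd (ymut_coef k (yt, p, B))) = snd (ymut_sf k (Y, B))"
    by (simp add: ymut_coef_def ymut_sf_def ymut_P_def Let_def)
  fix j
  obtain N D where ND: "evalS \<rho> (Y k) = (N, D)" by (cases "evalS \<rho> (Y k)") auto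
  have "\<exists>l. yt k = (l * fst (evalS \<rho> (Y k)), l * snd (evalS \<rho> (Y k)) * cP (p k))"
    using assms by (simp add: INV_def)
  then obtain l where k: "yt k = (l * N, l * D * cP (p k))" using ND by auto
  obtain Nj Dj where NDj: "evalS \<rho> (Y j) = (Nj, Dj)" by (cases "evalS \<rho> (Y j)") auto
  have "\<exists>l. yt j = (l * fst (evalS \<rho> (Y j)), l * snd (evalS \<rho> (Y j)) * cP (p j))"
    using assms by (simp add: INV_def)
  then obtain lj where jj: "yt j = (lj * Nj, lj * Dj * cP (p j))" using NDj by auto
  define P where "P = cP (p k)"
  define Q where "Q = cP (inverse (p k \<oplus> 1))"
  define R where "R = cP (p k \<oplus> 1)"
  define Pj where "Pj = cP (p j)"
  have QR: "Q * R = 1" unfolding Q_def R_def using cP_inv[of "p k \<oplus> 1"] by (simp add: mult.commute)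
  have PI: "P * cP (inverse (p k)) = 1" unfolding P_def by (rule cP_inv)
  show "\<exists>l. fst (ymut_coef k (yt, p, B)) j =
          (l * fst (evalS \<rho> (fst (ymut_sf k (Y, B)) j)),
           l * snd (evalS \<rho> (fst (ymut_sf k (Y, B)) j)) * cP (fst (snd (ymut_coef k (yt, p, B))) j))"
  proof (cases "j = k")
    case True
    have e1: "fst (ymut_coef k (yt, p, B)) j = (l * D * P, l * N)"
      using True k by (simp add: ymut_coef_def Let_def finv_def P_def)
    have e2: "evalS \<rho> (fst (ymut_sf k (Y, B)) j) = (D, N)"
      using True ND by (simp add: ymut_sf_def Let_def finv_def)
    have e3: "fst (snd (ymut_coef k (yt, p, B))) j = inverse (p k)"
      using True by (simp add: ymut_coef_def ymut_P_def Let_def)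
    have "l * P * N * cP (inverse (p k)) = l * N * (P * cP (inverse (p k)))" by (simp add: ac_simps)
    then have "l * N = l * P * N * cP (inverse (p k))" using PI by simp
    then show ?thesis unfolding e1 e2 e3
      by (intro exI[of _ "l * P"]) (simp add: mult.assoc mult.commute mult.left_commute)
  next
    case False
    consider "B k j = 0" | "B k j > 0" | "B k j < 0" by linarith
    then show ?thesis
    proof cases
      case 1
      show ?thesis using False 1 jj NDj
        by (intro exI[of _ lj]) (simp add: ymut_coef_def ymut_sf_def ymut_P_def Let_def fpow_def sepow_def
            spow_def fmul_def fone_def)
    next
      case 2
      define m where "m = nat (B k j)"
      have mB: "\<not> 0 \<le> - B k j" "nat (- (- B k j)) = m" "sgn (B k j) = 1" using 2 by (auto simp: m_def)
      have pb: "pbr (p k) (B k j) = pplus (p k)" "pbr (p k) (- B k j) = pminus (p k)"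
          using 2 by (auto simp: pbr_def)
      have e1: "fst (ymut_coef k (yt, p, B)) j = (lj * Nj * (l * N) ^ m, lj * Dj * Pj * (P * Q * (l * N) + Q * (l * D * P)) ^ m)"
        using False k jj mB
        by (simp add: ymut_coef_def Let_def fpow_def fnpow_eq pb cP_pplus cP_pminus finv_def fadd_def fconst_def
            fmul_def P_def Q_def Pj_def)
      have e2: "evalS \<rho> (fst (ymut_sf k (Y, B)) j) = (Nj * N ^ m, Dj * (N + D) ^ m)"
        using False ND NDj mB
        by (simp add: ymut_sf_def Let_def sepow_def evalS_snpow fnpow_eq finv_def fadd_def fone_def fmul_def
             add.commute)
      have e3: "cP (fst (snd (ymut_coef k (yt, p, B))) j) = Pj * (P * Q) ^ m"
        using False mB
        by (simp add: ymut_coef_def ymut_P_def Let_def spow_def sf_inv_key cP_mult cP_power P_def Q_def Pj_def)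
      have "P * Q * (l * N) + Q * (l * D * P) = (l * P * Q) * (N + D)"
        by (simp add: algebra_simps)
      then show ?thesis unfolding e1 e2 e3
        by (intro exI[of _ "lj * l ^ m"]) (simp add: power_mult_distrib mult.assoc mult.commute mult.left_commute)
    next
      case 3
      define m where "m = nat (- B k j)"
      have mB: "0 \<le> - B k j" "nat (- B k j) = m" "sgn (B k j) = -1" "\<not> 0 \<le> B k j" using 3 by (auto simp: m_def)
      have pb: "pbr (p k) (B k j) = pminus (p k)" "pbr (p k) (- B k j) = pplus (p k)"
          using 3 by (auto simp: pbr_def)
      define R where "R = cP (1 \<oplus> p k)"
      have QR: "Q * R = 1" unfolding Q_def R_def using cP_inv[of "p k \<oplus> 1"] sfadd_comm[of 1 "p k"]
        by (simp add: mult.commute)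
      have e1: "fst (ymut_coef k (yt, p, B)) j = (lj * Nj * (Q * (l * D * P) + P * Q * (l * N)) ^ m, lj * Dj * Pj * (l * D * P) ^ m)"
        using False k jj mB
        by (simp add: ymut_coef_def Let_def fpow_def fnpow_eq pb cP_pplus cP_pminus finv_def fadd_def fconst_def
            fmul_def P_def Q_def Pj_def)
      have e2: "evalS \<rho> (fst (ymut_sf k (Y, B)) j) = (Nj * (D + N) ^ m, Dj * D ^ m)"
        using False ND NDj mB
        by (simp add: ymut_sf_def Let_def sepow_def evalS_snpow fnpow_eq finv_def fadd_def fone_def fmul_def)
      have e3: "cP (fst (snd (ymut_coef k (yt, p, B))) j) = Pj * R ^ m"
        using False mB
        by (simp add: ymut_coef_def ymut_P_def Let_def spow_def cP_mult cP_power R_def Pj_def)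
      have n1: "Q * (l * D * P) + P * Q * (l * N) = (l * P * Q) * (D + N)"
        by (simp add: algebra_simps)
      have "(l * P * Q) ^ m * R ^ m = (l * P) ^ m * (Q * R) ^ m"
        by (simp add: power_mult_distrib ac_simps)
      then have n2: "(l * P * Q) ^ m * R ^ m = (l * P) ^ m" using QR by simp
      have d: "lj * (l * P * Q) ^ m * (Dj * D ^ m) * (Pj * R ^ m) = lj * Dj * Pj * (l * D * P) ^ m"
      proof -
        have "lj * (l * P * Q) ^ m * (Dj * D ^ m) * (Pj * R ^ m) = lj * Dj * Pj * D ^ m * ((l * P * Q) ^ m * R ^ m)"
          by (simp add: ac_simps)
        also have "\<dots> = lj * Dj * Pj * (l * D * P) ^ m" unfolding n2 by (simp add: power_mult_distrib ac_simps)
        finally show ?thesis .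
      qed
      have nu: "lj * Nj * (Q * (l * D * P) + P * Q * (l * N)) ^ m = lj * (l * P * Q) ^ m * (Nj * (D + N) ^ m)"
        unfolding n1 by (simp add: power_mult_distrib ac_simps)
      show ?thesis unfolding e1 e2 e3
        by (intro exI[of _ "lj * (l * P * Q) ^ m"]) (simp only: nu d fst_conv snd_conv)
    qed
  qed
qed

lemma fold_inv:
  "INV \<rho> s t \<Longrightarrow> INV \<rho> (fold ymut_coef ks s) (fold ymut_sf ks t)"
proof (induct ks arbitrary: s t)
  case Nil then show ?case by simp
next
  case (Cons k ks)
  obtain yt p B where s: "s = (yt, p, B)" by (cases s) auto
  obtain Y B' where t: "t = (Y, B')" by (cases t) auto
  have "B' = B" using Cons.prems s t by (simp add: INV_def)
  then have "INV \<rho> (ymut_coef k s) (ymut_sf k t)" using step Cons.prems s t by blast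
  then show ?case using Cons.hyps by simp
qed

theorem mainTheorem1:
  fixes n :: nat and B0 :: exmat and p0 :: "nat \<Rightarrow> 'p::semifield"
    and ks :: "nat list" and j :: nat
  assumes "skew_symmetrizable n B0"
    and "tree_vertex n ks"
    and "j < n"
  shows "feq (Ytilde B0 p0 ks j)
             (fmul (evalS (\<lambda>i. fconst (cP (p0 i) * yv i)) (Y_sf B0 ks j))
                   (finv (fconst (cP (pcoef B0 p0 ks j)))))"
proof -
  define \<rho> where "\<rho> = (\<lambda>i. fconst (cP (p0 i) * yv i) :: 'p frac)"
  have init: "INV \<rho> ((\<lambda>i. fconst (yv i)), p0, B0) (SVar, B0)"
    unfolding INV_def
  proof (intro conjI allI)
    fix i
    have "cP (inverse (p0 i)) * (cP (p0 i) * yv i) = yv i"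
      using cP_inv[of "p0 i"] by (simp add: mult.assoc[symmetric] mult.commute[of "cP (inverse (p0 i))"])
    moreover have "cP (inverse (p0 i)) * cP (p0 i) = 1" using cP_inv[of "p0 i"] by (simp add: mult.commute)
    ultimately show "\<exists>l. fst ((\<lambda>i. fconst (yv i)), p0, B0) i =
          (l * fst (evalS \<rho> (fst (SVar, B0) i)), l * snd (evalS \<rho> (fst (SVar, B0) i)) * cP (fst (snd ((\<lambda>i. fconst (yv i)), p0, B0)) i))"
      by (intro exI[of _ "cP (inverse (p0 i))"]) (simp add: \<rho>_def fconst_def)
  qed simp
  have "INV \<rho> (coef_seed B0 p0 ks) (fold ymut_sf ks (SVar, B0))"
    unfolding coef_seed_def using fold_inv[OF init] .
  then obtain l where l: "Ytilde B0 p0 ks j = (l * fst (evalS \<rho> (Y_sf B0 ks j)), l * snd (evalS \<rho> (Y_sf B0 ks j)) * cP (pcoef B0 p0 ks j))"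
    unfolding INV_def Ytilde_def Y_sf_def pcoef_def by blast
  show ?thesis
    unfolding \<rho>_def[symmetric] l
    by (simp add: feq_def fmul_def finv_def fconst_def ac_simps)
qed

end
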